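(* Let $X=x_1\dots x_n$ and $Y=y_1\dots y_m$ be finite words in $\{B,b,R,r\}$, and let $Z=y_m'y_{m-1}'\dots y_1'x_1x_2\dots x_n$, where $B'=b$, $R'=r$, $b'=B$, $r'=R$. Then $T(Z,m+1)=T_+(X)\cup T_-(Y)$, where the right-hand side is the triangulation of the union of $T_+(X)$ (in the upper half-plane) and $T_-(Y)$ (in the lower half-plane) glued along the real line, rooted at the root of $T_+(X)$.
   Context: Necklace construction (Sheffield). Given a finite word $X=x_1\dots x_n$ in $\{B,b,R,r\}$, build inductively disc triangulations $D_0\subset\dots\subset D_n$ in the closed upper half-plane with blue/red vertices and an active edge with blue endpoint $b_j$ and red endpoint $r_j$; initially non-positive integers are blue, positive integers red, $b_0=0,r_0=1$. Step according to $x_{j+1}$: (B) new blue vertex $b_{j+1}$, triangle $(b_j,r_j,b_{j+1})$, $r_{j+1}=r_j$; (R) new red vertex $r_{j+1}$, triangle $(b_j,r_j,r_{j+1})$, $b_{j+1}=b_j$; (b) $b_{j+1}$ = counterclockwise boundary neighbour of $b_j$ (or $m-1$, adding edge $[m-1,m]$, if $b_j=m\in\mathbb Z$), triangle $(b_{j+1},b_j,r_j)$, $r_{j+1}=r_j$; (r) $r_{j+1}$ = clockwise boundary neighbour of $r_j$ (or $m+1$, adding $[m,m+1]$, if $r_j=m\in\mathbb Z$), triangle $(b_j,r_j,r_{j+1})$, $b_{j+1}=b_j$. $T_+(X)$ is $D_n$ rooted at the first triangle constructed; $T_-(X)$ is the analogous construction in the lower half-plane; $T(X,k)$ is $T_+(X)$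 rerooted at the triangle created at step $k$. Equality is as rooted triangulations up to equivalence. *)

theory Defs
  imports Main
begin

text \<open>Combinatorial model of the necklace construction.
  Letters: LB = B (new blue vertex), Lb = b (blue boundary step),
  LR = R (new red vertex), Lr = r (red boundary step).\<close>

datatype letter = LB | Lb | LR | Lr

fun prime_letter :: "letter \<Rightarrow> letter" where
  "prime_letter LB = Lb"
| "prime_letter LR = Lr"
| "prime_letter Lb = LB"
| "prime_letter Lr = LR"

datatype color = Blue | Red

text \<open>Vertices: integer points of the real line, or the vertex created at step j
  (flag True = upper half-plane, False = lower half-plane), with its colour.\<close>
datatype vtx = RV int | NV bool nat color

text \<open>Edges: real-line edge [m,m+1], or a new edge created at step j (index k).\<close>
datatype edg = RE int | NE bool nat nat

fun vcol :: "vtx \<Rightarrow> color" where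
  "vcol (RV m) = (if m \<le> 0 then Blue else Red)"
| "vcol (NV s j c) = c"

text \<open>A triangle: vertices (v0,v1,v2) and edges (v0v1, v1v2, v2v0).\<close>
type_synonym tri = "(vtx \<times> vtx \<times> vtx) \<times> (edg \<times> edg \<times> edg)"

text \<open>State: boundary to the left of the blue active vertex (list of (next vertex,
  connecting edge), nearest first), blue active vertex, red active vertex,
  boundary to the right of the red active vertex, active edge.  Once a
  stack is empty the boundary continues along the real line.\<close>
type_synonym state = "(vtx \<times> edg) list \<times> vtx \<times> vtx \<times> (vtx \<times> edg) list \<times> edg"

definition init_state :: state where
  "init_state = ([], RV 0, RV 1, [], RE 0)"

fun pop_left :: "vtx \<Rightarrow> (vtx \<times> edg) list \<Rightarrow> vtx \<times> edg \<times> (vtx \<times> edg) list" where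
  "pop_left v ((w, e) # rest) = (w, e, rest)"
| "pop_left (RV m) [] = (RV (m - 1), RE (m - 1), [])"
| "pop_left v [] = undefined"

fun pop_right :: "vtx \<Rightarrow> (vtx \<times> edg) list \<Rightarrow> vtx \<times> edg \<times> (vtx \<times> edg) list" where
  "pop_right v ((w, e) # rest) = (w, e, rest)"
| "pop_right (RV m) [] = (RV (m + 1), RE m, [])"
| "pop_right v [] = undefined"

text \<open>One step of the construction, producing step number j+1 on side s.
  Triangles are listed in the vertex order given in the construction
  (which is counterclockwise in the upper half-plane).\<close>
fun step :: "bool \<Rightarrow> nat \<Rightarrow> state \<Rightarrow> letter \<Rightarrow> tri \<times> state" where
  "step s j (bl, b, r, rl, a) LB =
     (let w = NV s (Suc j) Blue; ebw = NE s (Suc j) 0; erw = NE s (Suc j) 1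
      in (((b, r, w), (a, erw, ebw)), ((b, ebw) # bl, w, r, rl, erw)))"
| "step s j (bl, b, r, rl, a) LR =
     (let w = NV s (Suc j) Red; ebw = NE s (Suc j) 0; erw = NE s (Suc j) 1
      in (((b, r, w), (a, erw, ebw)), (bl, b, w, (r, erw) # rl, ebw)))"
| "step s j (bl, b, r, rl, a) Lb =
     (case pop_left b bl of (v, e, rest) \<Rightarrow>
        (let a' = NE s (Suc j) 0
         in (((v, b, r), (e, a, a')), (rest, v, r, rl, a'))))"
| "step s j (bl, b, r, rl, a) Lr =
     (case pop_right r rl of (v, e, rest) \<Rightarrow>
        (let a' = NE s (Suc j) 0
         in (((b, r, v), (a, e, a')), (bl, b, v, rest, a'))))"

fun run :: "bool \<Rightarrow> nat \<Rightarrow> state \<Rightarrow> letter list \<Rightarrow> tri list" where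
  "run s j st [] = []"
| "run s j st (x # xs) = (case step s j st x of (t, st') \<Rightarrow> t # run s (Suc j) st' xs)"

text \<open>Triangles of D_n; the i-th entry (0-based) is the triangle created at step i+1.\<close>
definition tris :: "bool \<Rightarrow> letter list \<Rightarrow> tri list" where
  "tris s W = run s 0 init_state W"

text \<open>Rooted triangulation: list of triangles and index of the root triangle.\<close>
type_synonym rtri = "tri list \<times> nat"

definition Tplus :: "letter list \<Rightarrow> rtri" where
  "Tplus W = (tris True W, 0)"

text \<open>Lower half-plane construction (the mirror image); triangles stored in the
  construction order, which is clockwise in the plane.\<close>
definition Tminus :: "letter list \<Rightarrow> rtri" where
  "Tminus W = (tris False W, 0)"

text \<open>T(X,k): T_+(X) rerooted at the triangle created at step k.\<close>
definition Tat :: "letter list \<Rightarrow> nat \<Rightarrow> rtri" where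
  "Tat W k = (tris True W, k - 1)"

fun rev_tri :: "tri \<Rightarrow> tri" where
  "rev_tri ((a, b, c), (e0, e1, e2)) = ((a, c, b), (e2, e1, e0))"

text \<open>Gluing along the real line (integer vertices and real edges are shared);
  the lower triangles are reoriented to be counterclockwise in the plane.
  Rooted at the root of the upper triangulation.\<close>
definition glue :: "rtri \<Rightarrow> rtri \<Rightarrow> rtri" where
  "glue U L = (fst U @ map rev_tri (fst L), snd U)"

fun rot :: "tri \<Rightarrow> tri" where
  "rot ((a, b, c), (e0, e1, e2)) = ((b, c, a), (e1, e2, e0))"

fun map_tri :: "(vtx \<Rightarrow> vtx) \<Rightarrow> (edg \<Rightarrow> edg) \<Rightarrow> tri \<Rightarrow> tri" where
  "map_tri f g ((a, b, c), (e0, e1, e2)) = ((f a, f b, f c), (g e0, g e1, g e2))"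

fun tri_verts :: "tri \<Rightarrow> vtx set" where
  "tri_verts ((a, b, c), _) = {a, b, c}"

fun tri_edges :: "tri \<Rightarrow> edg set" where
  "tri_edges (_, (e0, e1, e2)) = {e0, e1, e2}"

definition verts :: "tri list \<Rightarrow> vtx set" where
  "verts ts = (\<Union>t\<in>set ts. tri_verts t)"

definition edges :: "tri list \<Rightarrow> edg set" where
  "edges ts = (\<Union>t\<in>set ts. tri_edges t)"

text \<open>Equivalence of rooted triangulations: bijections of triangles, vertices and
  edges preserving incidences with orientation (up to cyclic rotation of each
  triangle), vertex colours, and the root.\<close>
definition rt_equiv :: "rtri \<Rightarrow> rtri \<Rightarrow> bool" where
  "rt_equiv T1 T2 \<longleftrightarrow>
     snd T1 < length (fst T1) \<and>
     (\<exists>\<phi> \<alpha> \<beta>.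
        bij_betw \<phi> {..<length (fst T1)} {..<length (fst T2)} \<and>
        \<phi> (snd T1) = snd T2 \<and>
        bij_betw \<alpha> (verts (fst T1)) (verts (fst T2)) \<and>
        bij_betw \<beta> (edges (fst T1)) (edges (fst T2)) \<and>
        (\<forall>v\<in>verts (fst T1). vcol (\<alpha> v) = vcol v) \<and>
        (\<forall>i<length (fst T1). \<exists>k<(3::nat).
            map_tri \<alpha> \<beta> (fst T1 ! i) = (rot ^^ k) (fst T2 ! \<phi> i)))"

end

theory Submission
  imports Defs
begin

primrec lfr :: "nat \<Rightarrow> vtx \<Rightarrow> (vtx \<times> edg) list \<Rightarrow> vtx \<times> edg" where
  "lfr 0 v bl = (case pop_left v bl of (w, e, rest) \<Rightarrow> (w, e))"
| "lfr (Suc n) v bl = (case pop_left v bl of (w, e, rest) \<Rightarrow> lfr n w rest)"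

primrec rfr :: "nat \<Rightarrow> vtx \<Rightarrow> (vtx \<times> edg) list \<Rightarrow> vtx \<times> edg" where
  "rfr 0 v bl = (case pop_right v bl of (w, e, rest) \<Rightarrow> (w, e))"
| "rfr (Suc n) v bl = (case pop_right v bl of (w, e, rest) \<Rightarrow> rfr n w rest)"

fun Fv :: "state \<Rightarrow> int \<Rightarrow> vtx" where
  "Fv (bl,b,r,rl,a) p = (if p = 0 then b else if p = 1 then r else if p < 0
      then fst (lfr (nat (-p-1)) b bl) else fst (rfr (nat (p-2)) r rl))"

fun Fe :: "state \<Rightarrow> int \<Rightarrow> edg" where
  "Fe (bl,b,r,rl,a) p = (if p = 0 then a else if p < 0
      then snd (lfr (nat (-p-1)) b bl) else snd (rfr (nat (p-1)) r rl))"

lemma lfr_cons: "lfr n v ((w,e)#bl) = (if n = 0 then (w,e) else lfr (n-1) w bl)"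
  by (cases n) auto
lemma rfr_cons: "rfr n v ((w,e)#bl) = (if n = 0 then (w,e) else rfr (n-1) w bl)"
  by (cases n) auto

lemma lfr_init: "lfr n (RV q) [] = (RV (q - int n - 1), RE (q - int n - 1))"
  by (induction n arbitrary: q) (auto simp: algebra_simps)
lemma rfr_init: "rfr n (RV q) [] = (RV (q + int n + 1), RE (q + int n))"
  by (induction n arbitrary: q) (auto simp: algebra_simps)

lemma Fv_init: "Fv init_state p = RV p"
  by (auto simp: init_state_def lfr_init rfr_init)
lemma Fe_init: "Fe init_state p = RE p"
  by (auto simp: init_state_def lfr_init rfr_init)

lemma nat_m1: "p < 0 \<Longrightarrow> p \<noteq> -1 \<Longrightarrow> nat (- p - 1) - 1 = nat (- (p + 1) - 1)" by simp

lemma nat_minus1: "nat x - 1 = nat (x - 1)" by auto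
lemma lfr_shift: "pop_left v bl = (w,e,rest) \<Longrightarrow> 0 < n \<Longrightarrow> lfr n v bl = lfr (n - 1) w rest"
  by (cases n) auto
lemma rfr_shift: "pop_right v bl = (w,e,rest) \<Longrightarrow> 0 < n \<Longrightarrow> rfr n v bl = rfr (n - 1) w rest"
  by (cases n) auto
lemma lfr_0: "pop_left v bl = (w,e,rest) \<Longrightarrow> lfr 0 v bl = (w,e)" by simp
lemma rfr_0: "pop_right v bl = (w,e,rest) \<Longrightarrow> rfr 0 v bl = (w,e)" by simp
lemma nat_minusS: "nat x - Suc 0 = nat (x - 1)" by auto
lemmas nat_eqs = nat_minusS nat_minus1 lfr_shift rfr_shift lfr_0 rfr_0

lemma Fv_LB: "Fv (snd (step s j st LB)) p =
  (if p = 0 then NV s (Suc j) Blue else if p < 0 then Fv st (p+1) else Fv st p)"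
  by (cases st) (auto simp: Let_def lfr_cons nat_eqs algebra_simps)
lemma Fe_LB: "Fe (snd (step s j st LB)) p =
  (if p = 0 then NE s (Suc j) 1 else if p = -1 then NE s (Suc j) 0 else if p < 0 then Fe st (p+1) else Fe st p)"
  by (cases st) (auto simp: Let_def lfr_cons nat_eqs algebra_simps)
lemma T_LB: "fst (step s j st LB) = ((Fv st 0, Fv st 1, NV s (Suc j) Blue), (Fe st 0, NE s (Suc j) 1, NE s (Suc j) 0))"
  by (cases st) (auto simp: Let_def)

lemma Fv_LR: "Fv (snd (step s j st LR)) p =
  (if p = 1 then NV s (Suc j) Red else if p \<ge> 2 then Fv st (p - 1) else Fv st p)"
  by (cases st) (auto simp: Let_def rfr_cons nat_eqs algebra_simps)
lemma Fe_LR: "Fe (snd (step s j st LR)) p =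
  (if p = 0 then NE s (Suc j) 0 else if p = 1 then NE s (Suc j) 1 else if p \<ge> 2 then Fe st (p - 1) else Fe st p)"
  by (cases st) (auto simp: Let_def rfr_cons nat_eqs algebra_simps)
lemma T_LR: "fst (step s j st LR) = ((Fv st 0, Fv st 1, NV s (Suc j) Red), (Fe st 0, NE s (Suc j) 1, NE s (Suc j) 0))"
  by (cases st) (auto simp: Let_def)

lemma Fv_Lb: "Fv (snd (step s j st Lb)) p = (if p \<le> 0 then Fv st (p - 1) else Fv st p)"
  by (cases st) (auto simp: Let_def nat_eqs algebra_simps split: prod.split)
lemma Fe_Lb: "Fe (snd (step s j st Lb)) p = (if p = 0 then NE s (Suc j) 0 else if p < 0 then Fe st (p - 1) else Fe st p)"
  by (cases st) (auto simp: Let_def nat_eqs algebra_simps split: prod.split)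
lemma T_Lb: "fst (step s j st Lb) = ((Fv st (-1), Fv st 0, Fv st 1), (Fe st (-1), Fe st 0, NE s (Suc j) 0))"
  by (cases st) (auto simp: Let_def split: prod.split)

lemma Fv_Lr: "Fv (snd (step s j st Lr)) p = (if p \<ge> 1 then Fv st (p + 1) else Fv st p)"
  by (cases st) (auto simp: Let_def nat_eqs algebra_simps split: prod.split)
lemma Fe_Lr: "Fe (snd (step s j st Lr)) p = (if p = 0 then NE s (Suc j) 0 else if p \<ge> 1 then Fe st (p + 1) else Fe st p)"
  by (cases st) (auto simp: Let_def nat_eqs algebra_simps split: prod.split)
lemma T_Lr: "fst (step s j st Lr) = ((Fv st 0, Fv st 1, Fv st 2), (Fe st 0, Fe st 1, NE s (Suc j) 0))"
  by (cases st) (auto simp: Let_def split: prod.split)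


definition Inv :: "bool \<Rightarrow> nat \<Rightarrow> state \<Rightarrow> bool" where
  "Inv s j st \<longleftrightarrow> inj (Fv st) \<and> inj (Fe st) \<and>
     (\<forall>p i c. Fv st p = NV s i c \<longrightarrow> i \<le> j) \<and>
     (\<forall>p i kk. Fe st p = NE s i kk \<longrightarrow> i \<le> j) \<and>
     (\<forall>p. vcol (Fv st p) = (if p \<le> 0 then Blue else Red))"

lemma Inv_init: "Inv s 0 init_state"
  by (auto simp: Inv_def Fv_init Fe_init inj_def)

lemma Inv_step: assumes "Inv s j st" shows "Inv s (Suc j) (snd (step s j st x))"
proof -
  have i1: "inj (Fv st)" and i2: "inj (Fe st)" and f1: "\<And>p i c. Fv st p = NV s i c \<Longrightarrow> i \<le> j"
    and f2: "\<And>p i kk. Fe st p = NE s i kk \<Longrightarrow> i \<le> j"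
    and c: "\<And>p. vcol (Fv st p) = (if p \<le> 0 then Blue else Red)"
    using assms unfolding Inv_def by blast+
  have ne1: "Fv st p \<noteq> NV s (Suc j) c" for p c using f1[of p "Suc j" c] by auto
  have ne2: "Fe st p \<noteq> NE s (Suc j) kk" for p kk using f2[of p "Suc j" kk] by auto
  have ne1': "NV s (Suc j) c \<noteq> Fv st p" for p c using ne1 by metis
  have ne2': "NE s (Suc j) kk \<noteq> Fe st p" for p kk using ne2 by metis
  note ie1 = inj_eq[OF i1] and ie2 = inj_eq[OF i2]
  note ss = ie1 ie2 ne1 ne2 ne1' ne2' c
  show ?thesis
  proof (cases x)
    case LB
    show ?thesis unfolding LB Inv_def Fv_LB Fe_LB
      by (auto simp: inj_def ss split: if_splits dest!: f1 f2)
  next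
    case LR
    show ?thesis unfolding LR Inv_def Fv_LR Fe_LR
      by (auto simp: inj_def ss split: if_splits dest!: f1 f2)
  next
    case Lb
    show ?thesis unfolding Lb Inv_def Fv_Lb Fe_Lb
      by (auto simp: inj_def ss split: if_splits dest!: f1 f2)
  next
    case Lr
    show ?thesis unfolding Lr Inv_def Fv_Lr Fe_Lr
      by (auto simp: inj_def ss split: if_splits dest!: f1 f2)
  qed
qed


fun fin :: "bool \<Rightarrow> nat \<Rightarrow> state \<Rightarrow> letter list \<Rightarrow> state" where
  "fin s j st [] = st"
| "fin s j st (x # xs) = fin s (Suc j) (snd (step s j st x)) xs"

lemma run_Cons': "run s j st (x # xs) = fst (step s j st x) # run s (Suc j) (snd (step s j st x)) xs"
  by (simp split: prod.split)

lemma run_append: "run s j st (xs @ ys) = run s j st xs @ run s (j + length xs) (fin s j st xs) ys"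
  by (induction xs arbitrary: j st) (auto simp: run_Cons' simp del: run.simps(2))

lemma length_run[simp]: "length (run s j st xs) = length xs"
  by (induction xs arbitrary: j st) (auto simp: run_Cons' simp del: run.simps(2))

lemma Inv_fin: "Inv s j st \<Longrightarrow> Inv s (j + length xs) (fin s j st xs)"
proof (induction xs arbitrary: j st)
  case Nil thus ?case by simp
next
  case (Cons x xs)
  from Cons.IH[OF Inv_step[OF Cons.prems, of x]] show ?case by simp
qed

lemma fin_snoc: "fin s j st (xs @ [x]) = snd (step s (j + length xs) (fin s j st xs) x)"
  by (induction xs arbitrary: j st) auto

lemma verts_Nil[simp]: "verts [] = {}" and verts_Cons[simp]: "verts (t # ts) = tri_verts t \<union> verts ts"
  and verts_app[simp]: "verts (ts @ us) = verts ts \<union> verts us"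
  by (auto simp: verts_def)
lemma edges_Nil[simp]: "edges [] = {}" and edges_Cons[simp]: "edges (t # ts) = tri_edges t \<union> edges ts"
  and edges_app[simp]: "edges (ts @ us) = edges ts \<union> edges us"
  by (auto simp: edges_def)

lemma range_Fv_step: "range (Fv (snd (step s j st x))) \<subseteq> range (Fv st) \<union> {NV s (Suc j) c | c. True}"
  by (cases x) (auto simp: Fv_LB Fv_LR Fv_Lb Fv_Lr)
lemma range_Fe_step: "range (Fe (snd (step s j st x))) \<subseteq> range (Fe st) \<union> {NE s (Suc j) kk | kk. True}"
  by (cases x) (auto simp: Fe_LB Fe_LR Fe_Lb Fe_Lr)
lemma tri_verts_step: "tri_verts (fst (step s j st x)) \<subseteq> range (Fv st) \<union> {NV s (Suc j) c | c. True}"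
  by (cases x) (auto simp: T_LB T_LR T_Lb T_Lr)
lemma tri_edges_step: "tri_edges (fst (step s j st x)) \<subseteq> range (Fe st) \<union> {NE s (Suc j) kk | kk. True}"
  by (cases x) (auto simp: T_LB T_LR T_Lb T_Lr)

lemma sub_aux: "A \<subseteq> R \<union> N1 \<Longrightarrow> RR \<subseteq> R \<union> N1 \<Longrightarrow> B \<subseteq> RR \<union> N2 \<Longrightarrow> N1 \<subseteq> N \<Longrightarrow> N2 \<subseteq> N \<Longrightarrow> A \<union> B \<subseteq> R \<union> N"
  by blast

lemma verts_run: "verts (run s j st W) \<subseteq> range (Fv st) \<union> {NV s i c | i c. j < i \<and> i \<le> j + length W}"
proof (induction W arbitrary: j st)
  case Nil thus ?case by simp
next
  case (Cons x W)
  have "verts (run s (Suc j) (snd (step s j st x)) W) \<subseteq>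
     range (Fv (snd (step s j st x))) \<union> {NV s i c | i c. Suc j < i \<and> i \<le> Suc j + length W}"
    by (rule Cons.IH)
  moreover have "{NV s (Suc j) c | c. True} \<subseteq> {NV s i c | i c. j < i \<and> i \<le> j + length (x # W)}"
    by auto
  moreover have "{NV s i c | i c. Suc j < i \<and> i \<le> Suc j + length W} \<subseteq> {NV s i c | i c. j < i \<and> i \<le> j + length (x # W)}"
    by auto
  ultimately show ?case unfolding run_Cons' verts_Cons
    by (rule sub_aux[OF tri_verts_step range_Fv_step])
qed

lemma edges_run: "edges (run s j st W) \<subseteq> range (Fe st) \<union> {NE s i kk | i kk. j < i \<and> i \<le> j + length W}"
proof (induction W arbitrary: j st)
  case Nil thus ?case by simp
next
  case (Cons x W)
  have "edges (run s (Suc j) (snd (step s j st x)) W) \<subseteq>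
     range (Fe (snd (step s j st x))) \<union> {NE s i kk | i kk. Suc j < i \<and> i \<le> Suc j + length W}"
    by (rule Cons.IH)
  moreover have "{NE s (Suc j) kk | kk. True} \<subseteq> {NE s i kk | i kk. j < i \<and> i \<le> j + length (x # W)}"
    by auto
  moreover have "{NE s i kk | i kk. Suc j < i \<and> i \<le> Suc j + length W} \<subseteq> {NE s i kk | i kk. j < i \<and> i \<le> j + length (x # W)}"
    by auto
  ultimately show ?case unfolding run_Cons' edges_Cons
    by (rule sub_aux[OF tri_edges_step range_Fe_step])
qed

lemma lemA:
  assumes "\<forall>p. h (Fv st1 p) = Fv st2 p \<and> h' (Fe st1 p) = Fe st2 p"
    and "\<forall>i c. h (NV s (j1 + Suc i) c) = NV s (j2 + Suc i) c"
    and "\<forall>i kk. h' (NE s (j1 + Suc i) kk) = NE s (j2 + Suc i) kk"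
  shows "map (map_tri h h') (run s j1 st1 X) = run s j2 st2 X"
  using assms
proof (induction X arbitrary: j1 j2 st1 st2)
  case Nil thus ?case by simp
next
  case (Cons x X)
  have n1: "h (NV s (Suc j1) c) = NV s (Suc j2) c" for c using Cons.prems(2)[rule_format, of 0 c] by simp
  have n2: "h' (NE s (Suc j1) kk) = NE s (Suc j2) kk" for kk using Cons.prems(3)[rule_format, of 0 kk] by simp
  have fr: "h (Fv st1 p) = Fv st2 p" "h' (Fe st1 p) = Fe st2 p" for p using Cons.prems(1) by auto
  have t: "map_tri h h' (fst (step s j1 st1 x)) = fst (step s j2 st2 x)"
    by (cases x) (simp_all add: T_LB T_LR T_Lb T_Lr fr n1 n2)
  have f': "\<forall>p. h (Fv (snd (step s j1 st1 x)) p) = Fv (snd (step s j2 st2 x)) p \<and>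
               h' (Fe (snd (step s j1 st1 x)) p) = Fe (snd (step s j2 st2 x)) p"
    by (cases x) (simp_all add: Fv_LB Fv_LR Fv_Lb Fv_Lr Fe_LB Fe_LR Fe_Lb Fe_Lr fr n1 n2)
  have "map (map_tri h h') (run s (Suc j1) (snd (step s j1 st1 x)) X) = run s (Suc j2) (snd (step s j2 st2 x)) X"
  proof (rule Cons.IH[OF f'])
    show "\<forall>i c. h (NV s (Suc j1 + Suc i) c) = NV s (Suc j2 + Suc i) c"
    proof (intro allI)
      fix i c show "h (NV s (Suc j1 + Suc i) c) = NV s (Suc j2 + Suc i) c"
        using Cons.prems(2)[rule_format, of "Suc i" c] by simp
    qed
    show "\<forall>i kk. h' (NE s (Suc j1 + Suc i) kk) = NE s (Suc j2 + Suc i) kk"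
    proof (intro allI)
      fix i kk show "h' (NE s (Suc j1 + Suc i) kk) = NE s (Suc j2 + Suc i) kk"
        using Cons.prems(3)[rule_format, of "Suc i" kk] by simp
    qed
  qed
  with t show ?case by (simp add: run_Cons' del: run.simps(2))
qed


lemma ext_step:
  assumes invZ: "Inv s1 j sz" and invL: "Inv s2 k tw"
    and tw1: "tw1 = snd (step s2 k tw y)" and szm: "szm = snd (step s1 j sz (prime_letter y))"
    and tz: "tz = fst (step s1 j sz (prime_letter y))" and tt: "tt = fst (step s2 k tw y)"
    and P3v: "\<And>p. f1 (Fv sz p) = Fv tw1 p" "\<And>p. g1 (Fv tw1 p) = Fv sz p"
    and P3e: "\<And>p. f1' (Fe sz p) = Fe tw1 p" "\<And>p. g1' (Fe tw1 p) = Fe sz p"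
    and VWfresh: "\<And>v c. v \<in> VW \<Longrightarrow> v \<noteq> NV s1 (Suc j) c"
    and EWfresh: "\<And>e kk. e \<in> EW \<Longrightarrow> e \<noteq> NE s1 (Suc j) kk"
    and VWY: "\<And>v. v \<in> VW \<Longrightarrow> f1 v \<in> range (Fv tw1) \<or> (\<exists>i c. f1 v = NV s2 i c \<and> Suc k < i)"
    and EWY: "\<And>e. e \<in> EW \<Longrightarrow> f1' e \<in> range (Fe tw1) \<or> (\<exists>i kk. f1' e = NE s2 i kk \<and> Suc k < i)"
    and P2v: "\<And>v. v \<in> VW \<Longrightarrow> g1 (f1 v) = v"
    and P2e: "\<And>e. e \<in> EW \<Longrightarrow> g1' (f1' e) = e"
  shows "\<exists>f2 f2' g2 g2'. (\<forall>v\<in>VW. f2 v = f1 v) \<and> (\<forall>e\<in>EW. f2' e = f1' e)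
     \<and> (\<forall>v\<in>VW \<union> tri_verts tz. g2 (f2 v) = v) \<and> (\<forall>e\<in>EW \<union> tri_edges tz. g2' (f2' e) = e)
     \<and> (\<forall>v\<in>tri_verts tz. vcol (f2 v) = vcol v)
     \<and> map_tri f2 f2' tz = rev_tri tt
     \<and> (\<forall>p. f2 (Fv szm p) = Fv tw p \<and> g2 (Fv tw p) = Fv szm p
          \<and> f2' (Fe szm p) = Fe tw p \<and> g2' (Fe tw p) = Fe szm p)"
proof -
  have izv: "inj (Fv sz)" and ize: "inj (Fe sz)"
    and fz1: "\<And>p c. Fv sz p \<noteq> NV s1 (Suc j) c" and fz2: "\<And>p kk. Fe sz p \<noteq> NE s1 (Suc j) kk"
    and cz: "\<And>p. vcol (Fv sz p) = (if p \<le> 0 then Blue else Red)"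
    using invZ unfolding Inv_def by (blast, blast, force, force, blast)
  have ilv: "inj (Fv tw)" and ile: "inj (Fe tw)"
    and fl1: "\<And>p i c. Fv tw p = NV s2 i c \<Longrightarrow> i \<le> k" and fl2: "\<And>p i kk. Fe tw p = NE s2 i kk \<Longrightarrow> i \<le> k"
    using invL unfolding Inv_def by blast+
  have cl1: "\<And>p. vcol (Fv tw1 p) = (if p \<le> 0 then Blue else Red)"
    using Inv_step[OF invL, of y] unfolding Inv_def tw1 by blast
  have col: "vcol (f1 (Fv sz p)) = vcol (Fv sz p)" for p using P3v cl1 cz by simp
  have fl1': "Fv tw p \<noteq> NV s2 i c" if "k < i" for p i c using fl1[of p i c] that by auto
  have fl2': "Fe tw p \<noteq> NE s2 i kk" if "k < i" for p i kk using fl2[of p i kk] that by auto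
  have notin_v: "f1 v \<noteq> Fv tw q" if "v \<in> VW" "Fv tw q \<notin> range (Fv tw1)" for v q
    using VWY[OF that(1)] that(2) fl1' by force
  have notin_e: "f1' e \<noteq> Fe tw q" if "e \<in> EW" "Fe tw q \<notin> range (Fe tw1)" for e q
    using EWY[OF that(1)] that(2) fl2' by force
  note ilv' = inj_eq[OF ilv] and ile' = inj_eq[OF ile]
  show ?thesis
  proof (cases y)
    case LB
    have a_out: "Fe tw 0 \<notin> range (Fe tw1)"
      unfolding tw1 LB Fe_LB by (auto simp: ile' fl2')
    let ?n = "NE s1 (Suc j) 0"
    have tl1v: "Fv tw1 p = (if p = 0 then NV s2 (Suc k) Blue else if p < 0 then Fv tw (p+1) else Fv tw p)" for p
      unfolding tw1 LB Fv_LB ..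
    have tl1e: "Fe tw1 p = (if p = 0 then NE s2 (Suc k) 1 else if p = -1 then NE s2 (Suc k) 0 else if p < 0 then Fe tw (p+1) else Fe tw p)" for p
      unfolding tw1 LB Fe_LB ..
    have szmv: "Fv szm p = (if p \<le> 0 then Fv sz (p - 1) else Fv sz p)" for p
      unfolding szm LB by (simp add: Fv_Lb)
    have szme: "Fe szm p = (if p = 0 then ?n else if p < 0 then Fe sz (p - 1) else Fe sz p)" for p
      unfolding szm LB by (simp add: Fe_Lb)
    have tzE: "tz = ((Fv sz (-1), Fv sz 0, Fv sz 1), (Fe sz (-1), Fe sz 0, ?n))"
      unfolding tz LB by (simp add: T_Lb)
    have ttE: "tt = ((Fv tw 0, Fv tw 1, NV s2 (Suc k) Blue), (Fe tw 0, NE s2 (Suc k) 1, NE s2 (Suc k) 0))"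
      unfolding tt LB by (simp add: T_LB)
    have gv: "g1 (Fv tw p) = Fv szm p" for p
    proof (cases "p \<le> 0")
      case True
      then have "Fv tw p = Fv tw1 (p - 1)" using tl1v[of "p - 1"] by simp
      then show ?thesis using P3v(2)[of "p - 1"] True szmv by simp
    next
      case False
      then have "Fv tw p = Fv tw1 p" using tl1v[of p] by simp
      then show ?thesis using P3v(2)[of p] False szmv by simp
    qed
    have ge: "(g1'(Fe tw 0 := ?n)) (Fe tw p) = Fe szm p" for p
    proof (cases "p < 0")
      case True
      have ne: "Fe tw p \<noteq> Fe tw 0" using True by (simp add: ile')
      have eq: "Fe tw p = Fe tw1 (p - 1)" using tl1e[of "p - 1"] True by simp
      have "(g1'(Fe tw 0 := ?n)) (Fe tw p) = g1' (Fe tw p)" using ne by simp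
      also have "\<dots> = Fe szm p" using eq P3e(2)[of "p - 1"] True szme by simp
      finally show ?thesis .
    next
      case False
      then have "p = 0 \<or> (p > 0 \<and> Fe tw p = Fe tw1 p)" using tl1e[of p] by auto
      then show ?thesis using P3e(2)[of p] False szme by (auto simp: ile')
    qed
    show ?thesis
    proof (intro exI conjI ballI allI)
      show "f1 v = f1 v" for v by simp
      show "(f1'(?n := Fe tw 0)) e = f1' e" if "e \<in> EW" for e using EWfresh[OF that] by simp
      show "g1 (f1 v) = v" if "v \<in> VW \<union> tri_verts tz" for v
        using that P2v P3v tzE by auto
      show "(g1'(Fe tw 0 := ?n)) ((f1'(?n := Fe tw 0)) e) = e" if "e \<in> EW \<union> tri_edges tz" for e
        using that
      proof
        assume "e \<in> EW" thus ?thesis using EWfresh notin_e[OF _ a_out] P2e by auto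
      next
        have A: "(g1'(Fe tw 0 := ?n)) ((f1'(?n := Fe tw 0)) (Fe sz q)) = Fe sz q" for q
        proof -
          have "(f1'(?n := Fe tw 0)) (Fe sz q) = Fe tw1 q" using fz2[of q 0] P3e(1) by simp
          moreover have "Fe tw1 q \<noteq> Fe tw 0" using a_out by (metis rangeI)
          ultimately show ?thesis using P3e(2) by simp
        qed
        assume "e \<in> tri_edges tz"
        then have "e = Fe sz (-1) \<or> e = Fe sz 0 \<or> e = ?n" using tzE by simp
        moreover have "(g1'(Fe tw 0 := ?n)) ((f1'(?n := Fe tw 0)) ?n) = ?n" by simp
        ultimately show ?thesis using A by metis
      qed
      show "vcol (f1 v) = vcol v" if "v \<in> tri_verts tz" for v using that tzE col by auto
      show "map_tri f1 (f1'(?n := Fe tw 0)) tz = rev_tri tt"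
        using tzE ttE P3v P3e tl1v tl1e fz2 by simp
      show "f1 (Fv szm p) = Fv tw p" for p using szmv P3v tl1v by simp
      show "g1 (Fv tw p) = Fv szm p" for p by (rule gv)
      show "(f1'(?n := Fe tw 0)) (Fe szm p) = Fe tw p" for p using szme P3e tl1e fz2 by simp
      show "(g1'(Fe tw 0 := ?n)) (Fe tw p) = Fe szm p" for p by (rule ge)
    qed
  next
    case LR
    have a_out: "Fe tw 0 \<notin> range (Fe tw1)"
      unfolding tw1 LR Fe_LR by (auto simp: ile' fl2')
    let ?n = "NE s1 (Suc j) 0"
    have tl1v: "Fv tw1 p = (if p = 1 then NV s2 (Suc k) Red else if p \<ge> 2 then Fv tw (p - 1) else Fv tw p)" for p
      unfolding tw1 LR Fv_LR ..
    have tl1e: "Fe tw1 p = (if p = 0 then NE s2 (Suc k) 0 else if p = 1 then NE s2 (Suc k) 1 else if p \<ge> 2 then Fe tw (p - 1) else Fe tw p)" for p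
      unfolding tw1 LR Fe_LR ..
    have szmv: "Fv szm p = (if p \<ge> 1 then Fv sz (p + 1) else Fv sz p)" for p
      unfolding szm LR by (simp add: Fv_Lr)
    have szme: "Fe szm p = (if p = 0 then ?n else if p \<ge> 1 then Fe sz (p + 1) else Fe sz p)" for p
      unfolding szm LR by (simp add: Fe_Lr)
    have tzE: "tz = ((Fv sz 0, Fv sz 1, Fv sz 2), (Fe sz 0, Fe sz 1, ?n))"
      unfolding tz LR by (simp add: T_Lr)
    have ttE: "tt = ((Fv tw 0, Fv tw 1, NV s2 (Suc k) Red), (Fe tw 0, NE s2 (Suc k) 1, NE s2 (Suc k) 0))"
      unfolding tt LR by (simp add: T_LR)
    have gv: "g1 (Fv tw p) = Fv szm p" for p
    proof (cases "p \<ge> 1")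
      case True
      then have "Fv tw p = Fv tw1 (p + 1)" using tl1v[of "p + 1"] by simp
      then show ?thesis using P3v(2)[of "p + 1"] True szmv by simp
    next
      case False
      then have "Fv tw p = Fv tw1 p" using tl1v[of p] by simp
      then show ?thesis using P3v(2)[of p] False szmv by simp
    qed
    have ge: "(g1'(Fe tw 0 := ?n)) (Fe tw p) = Fe szm p" for p
    proof (cases "p = 0")
      case True then show ?thesis using szme by simp
    next
      case False
      have ne: "Fe tw p \<noteq> Fe tw 0" using False by (simp add: ile')
      have eq: "Fe tw p = Fe tw1 (if p \<ge> 1 then p + 1 else p)" using tl1e[of "if p \<ge> 1 then p + 1 else p"] False by auto
      have "(g1'(Fe tw 0 := ?n)) (Fe tw p) = g1' (Fe tw p)" using ne by simp
      also have "\<dots> = Fe szm p" using eq P3e(2)[of "if p \<ge> 1 then p + 1 else p"] False szme by (auto split: if_splits)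
      finally show ?thesis .
    qed
    show ?thesis
    proof (intro exI conjI ballI allI)
      show "f1 v = f1 v" for v by simp
      show "(f1'(?n := Fe tw 0)) e = f1' e" if "e \<in> EW" for e using EWfresh[OF that] by simp
      show "g1 (f1 v) = v" if "v \<in> VW \<union> tri_verts tz" for v
        using that P2v P3v tzE by auto
      show "(g1'(Fe tw 0 := ?n)) ((f1'(?n := Fe tw 0)) e) = e" if "e \<in> EW \<union> tri_edges tz" for e
        using that
      proof
        assume "e \<in> EW" thus ?thesis using EWfresh notin_e[OF _ a_out] P2e by auto
      next
        have A: "(g1'(Fe tw 0 := ?n)) ((f1'(?n := Fe tw 0)) (Fe sz q)) = Fe sz q" for q
        proof -
          have "(f1'(?n := Fe tw 0)) (Fe sz q) = Fe tw1 q" using fz2[of q 0] P3e(1) by simp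
          moreover have "Fe tw1 q \<noteq> Fe tw 0" using a_out by (metis rangeI)
          ultimately show ?thesis using P3e(2) by simp
        qed
        assume "e \<in> tri_edges tz"
        then have "e = Fe sz 0 \<or> e = Fe sz 1 \<or> e = ?n" using tzE by simp
        moreover have "(g1'(Fe tw 0 := ?n)) ((f1'(?n := Fe tw 0)) ?n) = ?n" by simp
        ultimately show ?thesis using A by metis
      qed
      show "vcol (f1 v) = vcol v" if "v \<in> tri_verts tz" for v using that tzE col by auto
      show "map_tri f1 (f1'(?n := Fe tw 0)) tz = rev_tri tt"
        using tzE ttE P3v P3e tl1v tl1e fz2 by simp
      show "f1 (Fv szm p) = Fv tw p" for p using szmv P3v tl1v by simp
      show "g1 (Fv tw p) = Fv szm p" for p by (rule gv)
      show "(f1'(?n := Fe tw 0)) (Fe szm p) = Fe tw p" for p using szme P3e tl1e fz2 by simp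
      show "(g1'(Fe tw 0 := ?n)) (Fe tw p) = Fe szm p" for p by (rule ge)
    qed
  next
    case Lb
    let ?w = "NV s1 (Suc j) Blue" and ?eb = "NE s1 (Suc j) 0" and ?er = "NE s1 (Suc j) 1"
    let ?x = "Fv tw 0" and ?xb = "Fe tw (-1)" and ?xr = "Fe tw 0"
    let ?f2 = "f1(?w := ?x)" and ?g2 = "g1(?x := ?w)"
    let ?f2' = "f1'(?eb := ?xb, ?er := ?xr)" and ?g2' = "g1'(?xb := ?eb, ?xr := ?er)"
    have tl1v: "Fv tw1 p = (if p \<le> 0 then Fv tw (p - 1) else Fv tw p)" for p
      unfolding tw1 Lb Fv_Lb ..
    have tl1e: "Fe tw1 p = (if p = 0 then NE s2 (Suc k) 0 else if p < 0 then Fe tw (p - 1) else Fe tw p)" for p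
      unfolding tw1 Lb Fe_Lb ..
    have x_out: "?x \<notin> range (Fv tw1)" unfolding tl1v by (auto simp: ilv')
    have xb_out: "?xb \<notin> range (Fe tw1)" unfolding tl1e by (auto simp: ile' fl2')
    have xr_out: "?xr \<notin> range (Fe tw1)" unfolding tl1e by (auto simp: ile' fl2')
    have szmv: "Fv szm p = (if p = 0 then ?w else if p < 0 then Fv sz (p + 1) else Fv sz p)" for p
      unfolding szm Lb by (simp add: Fv_LB)
    have szme: "Fe szm p = (if p = 0 then ?er else if p = -1 then ?eb else if p < 0 then Fe sz (p + 1) else Fe sz p)" for p
      unfolding szm Lb by (simp add: Fe_LB)
    have tzE: "tz = ((Fv sz 0, Fv sz 1, ?w), (Fe sz 0, ?er, ?eb))"
      unfolding tz Lb by (simp add: T_LB)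
    have ttE: "tt = ((Fv tw (-1), Fv tw 0, Fv tw 1), (Fe tw (-1), Fe tw 0, NE s2 (Suc k) 0))"
      unfolding tt Lb by (simp add: T_Lb)
    have cl: "vcol (Fv tw p) = (if p \<le> 0 then Blue else Red)" for p
      using invL unfolding Inv_def by blast
    have fv: "?f2 (Fv sz q) = Fv tw1 q" for q using fz1[of q Blue] P3v(1) by simp
    have fe: "?f2' (Fe sz q) = Fe tw1 q" for q using fz2[of q 0] fz2[of q 1] P3e(1) by simp
    have gv1: "?g2 (Fv tw1 q) = Fv sz q" for q
    proof -
      have "Fv tw1 q \<noteq> ?x" using x_out by (metis rangeI)
      thus ?thesis using P3v(2) by simp
    qed
    have ge1: "?g2' (Fe tw1 q) = Fe sz q" for q
    proof -
      have "Fe tw1 q \<noteq> ?xb" "Fe tw1 q \<noteq> ?xr" using xb_out xr_out by (metis rangeI)+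
      thus ?thesis using P3e(2) by simp
    qed
    have gv: "?g2 (Fv tw p) = Fv szm p" for p
    proof -
      consider "p = 0" | "p < 0" | "p > 0" by linarith
      then show ?thesis
      proof cases
        case 1 then show ?thesis using szmv by simp
      next
        case 2
        then have "Fv tw p = Fv tw1 (p + 1)" using tl1v[of "p + 1"] by simp
        then show ?thesis using gv1[of "p + 1"] 2 szmv by simp
      next
        case 3
        then have "Fv tw p = Fv tw1 p" using tl1v[of p] by simp
        then show ?thesis using gv1[of p] 3 szmv by simp
      qed
    qed
    have ge: "?g2' (Fe tw p) = Fe szm p" for p
    proof -
      consider "p = 0" | "p = -1" | "p < -1" | "p > 0" by linarith
      then show ?thesis
      proof cases
        case 1 then show ?thesis using szme by simp
      next
        case 2 then show ?thesis using szme by (simp add: ile')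
      next
        case 3
        then have "Fe tw p = Fe tw1 (p + 1)" using tl1e[of "p + 1"] by simp
        then show ?thesis using ge1[of "p + 1"] 3 szme by simp
      next
        case 4
        then have "Fe tw p = Fe tw1 p" using tl1e[of p] by simp
        then show ?thesis using ge1[of p] 4 szme by simp
      qed
    qed
    show ?thesis
    proof (intro exI conjI ballI allI)
      show "?f2 v = f1 v" if "v \<in> VW" for v using VWfresh[OF that] by simp
      show "?f2' e = f1' e" if "e \<in> EW" for e using EWfresh[OF that] by simp
      show "?g2 (?f2 v) = v" if "v \<in> VW \<union> tri_verts tz" for v
        using that
      proof
        assume "v \<in> VW" thus ?thesis using VWfresh notin_v[OF _ x_out] P2v by auto
      next
        assume "v \<in> tri_verts tz"
        then have "v = Fv sz 0 \<or> v = Fv sz 1 \<or> v = ?w" using tzE by simp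
        moreover have "?g2 (?f2 ?w) = ?w" by simp
        ultimately show ?thesis using fv gv1 by metis
      qed
      show "?g2' (?f2' e) = e" if "e \<in> EW \<union> tri_edges tz" for e
        using that
      proof
        assume "e \<in> EW" thus ?thesis using EWfresh notin_e[OF _ xb_out] notin_e[OF _ xr_out] P2e by auto
      next
        assume "e \<in> tri_edges tz"
        then have "e = Fe sz 0 \<or> e = ?er \<or> e = ?eb" using tzE by simp
        moreover have "?g2' (?f2' ?er) = ?er" "?g2' (?f2' ?eb) = ?eb" by (simp_all add: ile')
        ultimately show ?thesis using fe ge1 by metis
      qed
      show "vcol (?f2 v) = vcol v" if "v \<in> tri_verts tz" for v
      proof -
        have "v = Fv sz 0 \<or> v = Fv sz 1 \<or> v = ?w" using that tzE by simp
        moreover have "vcol (?f2 ?w) = vcol ?w" using cl[of 0] by simp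
        ultimately show ?thesis using fv col fz1 by (metis fun_upd_other)
      qed
      show "map_tri ?f2 ?f2' tz = rev_tri tt"
        using tzE ttE fv fe tl1v tl1e by simp
      show "?f2 (Fv szm p) = Fv tw p" for p
      proof -
        consider "p = 0" | "p < 0" | "p > 0" by linarith
        then show ?thesis
        proof cases
          case 1 then show ?thesis using szmv by simp
        next
          case 2 then show ?thesis using szmv[of p] fv[of "p + 1"] tl1v[of "p + 1"] by simp
        next
          case 3 then show ?thesis using szmv[of p] fv[of p] tl1v[of p] by simp
        qed
      qed
      show "?g2 (Fv tw p) = Fv szm p" for p by (rule gv)
      show "?f2' (Fe szm p) = Fe tw p" for p
      proof -
        consider "p = 0" | "p = -1" | "p < -1" | "p > 0" by linarith
        then show ?thesis
        proof cases
          case 1 then show ?thesis using szme by simp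
        next
          case 2 then show ?thesis using szme by simp
        next
          case 3 then show ?thesis using szme[of p] fe[of "p + 1"] tl1e[of "p + 1"] by simp
        next
          case 4 then show ?thesis using szme[of p] fe[of p] tl1e[of p] by simp
        qed
      qed
      show "?g2' (Fe tw p) = Fe szm p" for p by (rule ge)
    qed
  next
    case Lr
    let ?w = "NV s1 (Suc j) Red" and ?eb = "NE s1 (Suc j) 0" and ?er = "NE s1 (Suc j) 1"
    let ?x = "Fv tw 1" and ?xb = "Fe tw 0" and ?xr = "Fe tw 1"
    let ?f2 = "f1(?w := ?x)" and ?g2 = "g1(?x := ?w)"
    let ?f2' = "f1'(?eb := ?xb, ?er := ?xr)" and ?g2' = "g1'(?xb := ?eb, ?xr := ?er)"
    have tl1v: "Fv tw1 p = (if p \<ge> 1 then Fv tw (p + 1) else Fv tw p)" for p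
      unfolding tw1 Lr Fv_Lr ..
    have tl1e: "Fe tw1 p = (if p = 0 then NE s2 (Suc k) 0 else if p \<ge> 1 then Fe tw (p + 1) else Fe tw p)" for p
      unfolding tw1 Lr Fe_Lr ..
    have x_out: "?x \<notin> range (Fv tw1)" unfolding tl1v by (auto simp: ilv')
    have xb_out: "?xb \<notin> range (Fe tw1)" unfolding tl1e by (auto simp: ile' fl2')
    have xr_out: "?xr \<notin> range (Fe tw1)" unfolding tl1e by (auto simp: ile' fl2')
    have szmv: "Fv szm p = (if p = 1 then ?w else if p \<ge> 2 then Fv sz (p - 1) else Fv sz p)" for p
      unfolding szm Lr by (simp add: Fv_LR)
    have szme: "Fe szm p = (if p = 0 then ?eb else if p = 1 then ?er else if p \<ge> 2 then Fe sz (p - 1) else Fe sz p)" for p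
      unfolding szm Lr by (simp add: Fe_LR)
    have tzE: "tz = ((Fv sz 0, Fv sz 1, ?w), (Fe sz 0, ?er, ?eb))"
      unfolding tz Lr by (simp add: T_LR)
    have ttE: "tt = ((Fv tw 0, Fv tw 1, Fv tw 2), (Fe tw 0, Fe tw 1, NE s2 (Suc k) 0))"
      unfolding tt Lr by (simp add: T_Lr)
    have cl: "vcol (Fv tw p) = (if p \<le> 0 then Blue else Red)" for p
      using invL unfolding Inv_def by blast
    have fv: "?f2 (Fv sz q) = Fv tw1 q" for q using fz1[of q Red] P3v(1) by simp
    have fe: "?f2' (Fe sz q) = Fe tw1 q" for q using fz2[of q 0] fz2[of q 1] P3e(1) by simp
    have gv1: "?g2 (Fv tw1 q) = Fv sz q" for q
    proof -
      have "Fv tw1 q \<noteq> ?x" using x_out by (metis rangeI)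
      thus ?thesis using P3v(2) by simp
    qed
    have ge1: "?g2' (Fe tw1 q) = Fe sz q" for q
    proof -
      have "Fe tw1 q \<noteq> ?xb" "Fe tw1 q \<noteq> ?xr" using xb_out xr_out by (metis rangeI)+
      thus ?thesis using P3e(2) by simp
    qed
    have gv: "?g2 (Fv tw p) = Fv szm p" for p
    proof -
      consider "p = 1" | "p \<ge> 2" | "p \<le> 0" by linarith
      then show ?thesis
      proof cases
        case 1 then show ?thesis using szmv by simp
      next
        case 2
        then have "Fv tw p = Fv tw1 (p - 1)" using tl1v[of "p - 1"] by simp
        then show ?thesis using gv1[of "p - 1"] 2 szmv by simp
      next
        case 3
        then have "Fv tw p = Fv tw1 p" using tl1v[of p] by simp
        then show ?thesis using gv1[of p] 3 szmv by simp
      qed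
    qed
    have ge: "?g2' (Fe tw p) = Fe szm p" for p
    proof -
      consider "p = 0" | "p = 1" | "p \<ge> 2" | "p < 0" by linarith
      then show ?thesis
      proof cases
        case 1 then show ?thesis using szme by (simp add: ile')
      next
        case 2 then show ?thesis using szme by (simp add: ile')
      next
        case 3
        then have "Fe tw p = Fe tw1 (p - 1)" using tl1e[of "p - 1"] by simp
        then show ?thesis using ge1[of "p - 1"] 3 szme by simp
      next
        case 4
        then have "Fe tw p = Fe tw1 p" using tl1e[of p] by simp
        then show ?thesis using ge1[of p] 4 szme by simp
      qed
    qed
    show ?thesis
    proof (intro exI conjI ballI allI)
      show "?f2 v = f1 v" if "v \<in> VW" for v using VWfresh[OF that] by simp
      show "?f2' e = f1' e" if "e \<in> EW" for e using EWfresh[OF that] by simp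
      show "?g2 (?f2 v) = v" if "v \<in> VW \<union> tri_verts tz" for v
        using that
      proof
        assume "v \<in> VW" thus ?thesis using VWfresh notin_v[OF _ x_out] P2v by auto
      next
        assume "v \<in> tri_verts tz"
        then have "v = Fv sz 0 \<or> v = Fv sz 1 \<or> v = ?w" using tzE by simp
        moreover have "?g2 (?f2 ?w) = ?w" by simp
        ultimately show ?thesis using fv gv1 by metis
      qed
      show "?g2' (?f2' e) = e" if "e \<in> EW \<union> tri_edges tz" for e
        using that
      proof
        assume "e \<in> EW" thus ?thesis using EWfresh notin_e[OF _ xb_out] notin_e[OF _ xr_out] P2e by auto
      next
        assume "e \<in> tri_edges tz"
        then have "e = Fe sz 0 \<or> e = ?er \<or> e = ?eb" using tzE by simp
        moreover have "?g2' (?f2' ?er) = ?er" "?g2' (?f2' ?eb) = ?eb" by (simp_all add: ile')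
        ultimately show ?thesis using fe ge1 by metis
      qed
      show "vcol (?f2 v) = vcol v" if "v \<in> tri_verts tz" for v
      proof -
        have "v = Fv sz 0 \<or> v = Fv sz 1 \<or> v = ?w" using that tzE by simp
        moreover have "vcol (?f2 ?w) = vcol ?w" using cl[of 1] by simp
        ultimately show ?thesis using fv col fz1 by (metis fun_upd_other)
      qed
      show "map_tri ?f2 ?f2' tz = rev_tri tt"
        using tzE ttE fv fe tl1v tl1e by simp
      show "?f2 (Fv szm p) = Fv tw p" for p
      proof -
        consider "p = 1" | "p \<ge> 2" | "p \<le> 0" by linarith
        then show ?thesis
        proof cases
          case 1 then show ?thesis using szmv by simp
        next
          case 2 then show ?thesis using szmv[of p] fv[of "p - 1"] tl1v[of "p - 1"] by simp
        next
          case 3 then show ?thesis using szmv[of p] fv[of p] tl1v[of p] by simp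
        qed
      qed
      show "?g2 (Fv tw p) = Fv szm p" for p by (rule gv)
      show "?f2' (Fe szm p) = Fe tw p" for p
      proof -
        consider "p = 0" | "p = 1" | "p \<ge> 2" | "p < 0" by linarith
        then show ?thesis
        proof cases
          case 1 then show ?thesis using szme by simp
        next
          case 2 then show ?thesis using szme by simp
        next
          case 3 then show ?thesis using szme[of p] fe[of "p - 1"] tl1e[of "p - 1"] by simp
        next
          case 4 then show ?thesis using szme[of p] fe[of p] tl1e[of p] by simp
        qed
      qed
      show "?g2' (Fe tw p) = Fe szm p" for p by (rule ge)
    qed
  qed
qed


lemma map_tri_cong: "(\<forall>v\<in>tri_verts t. f v = g v) \<Longrightarrow> (\<forall>e\<in>tri_edges t. f' e = g' e) \<Longrightarrow> map_tri f f' t = map_tri g g' t"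
  by (cases t) auto
lemma tri_verts_map: "tri_verts (map_tri f f' t) = f ` tri_verts t"
  by (cases t) auto
lemma tri_edges_map: "tri_edges (map_tri f f' t) = f' ` tri_edges t"
  by (cases t) auto
lemma tri_verts_rev: "tri_verts (rev_tri t) = tri_verts t"
  by (cases t) auto
lemma tri_edges_rev: "tri_edges (rev_tri t) = tri_edges t"
  by (cases t) auto
lemma verts_nth: "v \<in> verts ts \<Longrightarrow> \<exists>i<length ts. v \<in> tri_verts (ts ! i)"
  unfolding verts_def by (metis UN_E in_set_conv_nth)
lemma edges_nth: "e \<in> edges ts \<Longrightarrow> \<exists>i<length ts. e \<in> tri_edges (ts ! i)"
  unfolding edges_def by (metis UN_E in_set_conv_nth)
lemma nth_verts: "i < length ts \<Longrightarrow> tri_verts (ts ! i) \<subseteq> verts ts"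
  unfolding verts_def by (metis UN_upper nth_mem)
lemma nth_edges: "i < length ts \<Longrightarrow> tri_edges (ts ! i) \<subseteq> edges ts"
  unfolding edges_def by (metis UN_upper nth_mem)

lemma img_verts:
  assumes "\<forall>i<length A. map_tri f f' (A ! i) = rev_tri (B ! (length A - Suc i))" "length B = length A"
    and "v \<in> verts A"
  shows "f v \<in> verts B"
proof -
  obtain i where i: "i < length A" "v \<in> tri_verts (A ! i)" using verts_nth[OF assms(3)] by blast
  have "f v \<in> tri_verts (map_tri f f' (A ! i))" using i(2) by (simp add: tri_verts_map)
  also have "\<dots> = tri_verts (B ! (length A - Suc i))" using assms(1) i(1) by (simp add: tri_verts_rev)
  also have "\<dots> \<subseteq> verts B" using nth_verts[of "length A - Suc i" B] i(1) assms(2) by simp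
  finally show ?thesis .
qed

lemma img_edges:
  assumes "\<forall>i<length A. map_tri f f' (A ! i) = rev_tri (B ! (length A - Suc i))" "length B = length A"
    and "e \<in> edges A"
  shows "f' e \<in> edges B"
proof -
  obtain i where i: "i < length A" "e \<in> tri_edges (A ! i)" using edges_nth[OF assms(3)] by blast
  have "f' e \<in> tri_edges (map_tri f f' (A ! i))" using i(2) by (simp add: tri_edges_map)
  also have "\<dots> = tri_edges (B ! (length A - Suc i))" using assms(1) i(1) by (simp add: tri_edges_rev)
  also have "\<dots> \<subseteq> edges B" using nth_edges[of "length A - Suc i" B] i(1) assms(2) by simp
  finally show ?thesis .
qed

lemma lemP:
  assumes invZ: "Inv s1 j sz" and invL: "Inv s2 k tw"
  shows "\<exists>f f' g g'.
   (\<forall>i < length Y. map_tri f f' (run s1 j sz (rev (map prime_letter Y)) ! i) = rev_tri (run s2 k tw Y ! (length Y - Suc i)))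
 \<and> (\<forall>v \<in> verts (run s1 j sz (rev (map prime_letter Y))). g (f v) = v \<and> vcol (f v) = vcol v)
 \<and> (\<forall>e \<in> edges (run s1 j sz (rev (map prime_letter Y))). g' (f' e) = e)
 \<and> (\<forall>p. f (Fv (fin s1 j sz (rev (map prime_letter Y))) p) = Fv tw p
      \<and> g (Fv tw p) = Fv (fin s1 j sz (rev (map prime_letter Y))) p
      \<and> f' (Fe (fin s1 j sz (rev (map prime_letter Y))) p) = Fe tw p
      \<and> g' (Fe tw p) = Fe (fin s1 j sz (rev (map prime_letter Y))) p)"
  using invL
proof (induction Y arbitrary: k tw)
  case Nil
  have i1: "inj (Fv sz)" "inj (Fe sz)" using invZ unfolding Inv_def by blast+
  have i2: "inj (Fv tw)" "inj (Fe tw)" using Nil unfolding Inv_def by blast+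
  show ?case
    apply (rule exI[of _ "\<lambda>v. Fv tw (inv (Fv sz) v)"], rule exI[of _ "\<lambda>e. Fe tw (inv (Fe sz) e)"])
    apply (rule exI[of _ "\<lambda>v. Fv sz (inv (Fv tw) v)"], rule exI[of _ "\<lambda>e. Fe sz (inv (Fe tw) e)"])
    using i1 i2 by (simp add: inv_f_f)
next
  case (Cons y Y)
  define W' where "W' = rev (map prime_letter Y)"
  define tw1 where "tw1 = snd (step s2 k tw y)"
  define sz' where "sz' = fin s1 j sz W'"
  have lW: "length W' = length Y" by (simp add: W'_def)
  have W: "rev (map prime_letter (y # Y)) = W' @ [prime_letter y]" by (simp add: W'_def)
  have inv1: "Inv s2 (Suc k) tw1" unfolding tw1_def by (rule Inv_step[OF Cons.prems])
  have invz': "Inv s1 (j + length Y) sz'" unfolding sz'_def using Inv_fin[OF invZ, of W'] lW by simp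
  obtain f1 f1' g1 g1' where
    P1: "\<forall>i < length Y. map_tri f1 f1' (run s1 j sz W' ! i) = rev_tri (run s2 (Suc k) tw1 Y ! (length Y - Suc i))"
    and P2: "\<forall>v \<in> verts (run s1 j sz W'). g1 (f1 v) = v \<and> vcol (f1 v) = vcol v"
    and P2e: "\<forall>e \<in> edges (run s1 j sz W'). g1' (f1' e) = e"
    and P3: "\<forall>p. f1 (Fv sz' p) = Fv tw1 p \<and> g1 (Fv tw1 p) = Fv sz' p
      \<and> f1' (Fe sz' p) = Fe tw1 p \<and> g1' (Fe tw1 p) = Fe sz' p"
    using Cons.IH[OF inv1] unfolding W'_def[symmetric] sz'_def[symmetric] by blast
  let ?VW = "verts (run s1 j sz W')" and ?EW = "edges (run s1 j sz W')"
  have fzv: "\<And>p i c. Fv sz p = NV s1 i c \<Longrightarrow> i \<le> j" and fze: "\<And>p i kk. Fe sz p = NE s1 i kk \<Longrightarrow> i \<le> j"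
    using invZ unfolding Inv_def by blast+
  have VWfresh: "v \<noteq> NV s1 (Suc (j + length Y)) c" if "v \<in> ?VW" for v c
  proof
    assume a: "v = NV s1 (Suc (j + length Y)) c"
    from verts_run[of s1 j sz W'] that lW have "v \<in> range (Fv sz) \<or> (\<exists>i c. v = NV s1 i c \<and> i \<le> j + length Y)" by auto
    then show False
    proof
      assume "v \<in> range (Fv sz)" then obtain p where "Fv sz p = v" by auto
      then show False using a fzv[of p "Suc (j + length Y)" c] by simp
    qed (use a in simp)
  qed
  have EWfresh: "e \<noteq> NE s1 (Suc (j + length Y)) kk" if "e \<in> ?EW" for e kk
  proof
    assume a: "e = NE s1 (Suc (j + length Y)) kk"
    from edges_run[of s1 j sz W'] that lW have "e \<in> range (Fe sz) \<or> (\<exists>i kk. e = NE s1 i kk \<and> i \<le> j + length Y)" by auto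
    then show False
    proof
      assume "e \<in> range (Fe sz)" then obtain p where "Fe sz p = e" by auto
      then show False using a fze[of p "Suc (j + length Y)" kk] by simp
    qed (use a in simp)
  qed
  have lens: "length (run s2 (Suc k) tw1 Y) = length (run s1 j sz W')" by (simp add: lW)
  have P1': "\<forall>i<length (run s1 j sz W'). map_tri f1 f1' (run s1 j sz W' ! i) = rev_tri (run s2 (Suc k) tw1 Y ! (length (run s1 j sz W') - Suc i))"
    using P1 lW by simp
  have VWY: "f1 v \<in> range (Fv tw1) \<or> (\<exists>i c. f1 v = NV s2 i c \<and> Suc k < i)" if "v \<in> ?VW" for v
    using img_verts[OF P1' lens that] verts_run[of s2 "Suc k" tw1 Y] by blast
  have EWY: "f1' e \<in> range (Fe tw1) \<or> (\<exists>i kk. f1' e = NE s2 i kk \<and> Suc k < i)" if "e \<in> ?EW" for e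
    using img_edges[OF P1' lens that] edges_run[of s2 "Suc k" tw1 Y] by blast
  obtain f2 f2' g2 g2' where
    E1: "\<forall>v\<in>?VW. f2 v = f1 v" and E2: "\<forall>e\<in>?EW. f2' e = f1' e"
    and E3: "\<forall>v\<in>?VW \<union> tri_verts (fst (step s1 (j + length Y) sz' (prime_letter y))). g2 (f2 v) = v"
    and E4: "\<forall>e\<in>?EW \<union> tri_edges (fst (step s1 (j + length Y) sz' (prime_letter y))). g2' (f2' e) = e"
    and E5: "\<forall>v\<in>tri_verts (fst (step s1 (j + length Y) sz' (prime_letter y))). vcol (f2 v) = vcol v"
    and E6: "map_tri f2 f2' (fst (step s1 (j + length Y) sz' (prime_letter y))) = rev_tri (fst (step s2 k tw y))"
    and E7: "\<forall>p. f2 (Fv (snd (step s1 (j + length Y) sz' (prime_letter y))) p) = Fv tw p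
          \<and> g2 (Fv tw p) = Fv (snd (step s1 (j + length Y) sz' (prime_letter y))) p
          \<and> f2' (Fe (snd (step s1 (j + length Y) sz' (prime_letter y))) p) = Fe tw p
          \<and> g2' (Fe tw p) = Fe (snd (step s1 (j + length Y) sz' (prime_letter y))) p"
    using ext_step[OF invz' Cons.prems tw1_def refl refl refl, of f1 g1 f1' g1' ?VW ?EW]
      P3 VWfresh EWfresh VWY EWY P2 P2e by blast
  have runW: "run s1 j sz (rev (map prime_letter (y # Y))) = run s1 j sz W' @ [fst (step s1 (j + length Y) sz' (prime_letter y))]"
    unfolding W run_append by (simp add: lW sz'_def run_Cons' del: run.simps(2))
  have finW: "fin s1 j sz (rev (map prime_letter (y # Y))) = snd (step s1 (j + length Y) sz' (prime_letter y))"
    unfolding W fin_snoc by (simp add: lW sz'_def)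
  have runY: "run s2 k tw (y # Y) = fst (step s2 k tw y) # run s2 (Suc k) tw1 Y"
    by (simp add: run_Cons' tw1_def del: run.simps(2))
  show ?case
  proof (intro exI conjI allI impI ballI)
    fix i assume i: "i < length (y # Y)"
    show "map_tri f2 f2' (run s1 j sz (rev (map prime_letter (y # Y))) ! i) =
          rev_tri (run s2 k tw (y # Y) ! (length (y # Y) - Suc i))"
    proof (cases "i < length Y")
      case True
      have "map_tri f2 f2' (run s1 j sz W' ! i) = map_tri f1 f1' (run s1 j sz W' ! i)"
        apply (rule map_tri_cong)
        using E1 E2 nth_verts[of i "run s1 j sz W'"] nth_edges[of i "run s1 j sz W'"] True lW by auto
      also have "\<dots> = rev_tri (run s2 (Suc k) tw1 Y ! (length Y - Suc i))" using P1 True by blast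
      also have "\<dots> = rev_tri (run s2 k tw (y # Y) ! (length (y # Y) - Suc i))"
        unfolding runY using True by (simp add: Suc_diff_Suc)
      finally show ?thesis unfolding runW using True lW by (simp add: nth_append)
    next
      case False
      then have "i = length Y" using i by simp
      then show ?thesis unfolding runW runY using lW E6 by (simp add: nth_append)
    qed
  next
    fix v assume "v \<in> verts (run s1 j sz (rev (map prime_letter (y # Y))))"
    then have v: "v \<in> ?VW \<union> tri_verts (fst (step s1 (j + length Y) sz' (prime_letter y)))"
      unfolding runW by simp
    show "g2 (f2 v) = v" using E3 v by blast
    show "vcol (f2 v) = vcol v" using v E1 E5 P2 by auto
  next
    fix e assume "e \<in> edges (run s1 j sz (rev (map prime_letter (y # Y))))"
    then have e: "e \<in> ?EW \<union> tri_edges (fst (step s1 (j + length Y) sz' (prime_letter y)))"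
      unfolding runW by simp
    show "g2' (f2' e) = e" using E4 e by blast
  next
    fix p
    show "f2 (Fv (fin s1 j sz (rev (map prime_letter (y # Y)))) p) = Fv tw p"
      "g2 (Fv tw p) = Fv (fin s1 j sz (rev (map prime_letter (y # Y)))) p"
      "f2' (Fe (fin s1 j sz (rev (map prime_letter (y # Y)))) p) = Fe tw p"
      "g2' (Fe tw p) = Fe (fin s1 j sz (rev (map prime_letter (y # Y)))) p"
      unfolding finW using E7 by blast+
  qed
qed


fun shv :: "nat \<Rightarrow> (vtx \<Rightarrow> vtx) \<Rightarrow> vtx \<Rightarrow> vtx" where
  "shv m f (NV s i c) = (if s \<and> m < i then NV s (i - m) c else f (NV s i c))"
| "shv m f (RV q) = f (RV q)"
fun she :: "nat \<Rightarrow> (edg \<Rightarrow> edg) \<Rightarrow> edg \<Rightarrow> edg" where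
  "she m f (NE s i kk) = (if s \<and> m < i then NE s (i - m) kk else f (NE s i kk))"
| "she m f (RE q) = f (RE q)"
fun unv :: "nat \<Rightarrow> (vtx \<Rightarrow> vtx) \<Rightarrow> vtx \<Rightarrow> vtx" where
  "unv m g (NV s i c) = (if s then NV s (i + m) c else g (NV s i c))"
| "unv m g (RV q) = g (RV q)"
fun une :: "nat \<Rightarrow> (edg \<Rightarrow> edg) \<Rightarrow> edg \<Rightarrow> edg" where
  "une m g (NE s i kk) = (if s then NE s (i + m) kk else g (NE s i kk))"
| "une m g (RE q) = g (RE q)"

lemma shv_old: "(\<And>i c. v = NV True i c \<Longrightarrow> i \<le> m) \<Longrightarrow> shv m f v = f v"
  by (cases v) auto
lemma she_old: "(\<And>i kk. e = NE True i kk \<Longrightarrow> i \<le> m) \<Longrightarrow> she m f e = f e"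
  by (cases e) auto
lemma unv_old: "(\<And>i c. v \<noteq> NV True i c) \<Longrightarrow> unv m g v = g v"
  by (cases v) auto
lemma une_old: "(\<And>i kk. e \<noteq> NE True i kk) \<Longrightarrow> une m g e = g e"
  by (cases e) auto

theorem mainTheorem10:
  fixes X Y :: "letter list"
  assumes "X \<noteq> []"
  shows "rt_equiv (Tat (rev (map prime_letter Y) @ X) (length Y + 1))
                  (glue (Tplus X) (Tminus Y))"
proof -
  define m where "m = length Y"
  define n where "n = length X"
  define W where "W = rev (map prime_letter Y)"
  define sm where "sm = fin True 0 init_state W"
  define ZT where "ZT = tris True (W @ X)"
  define GT where "GT = tris True X @ map rev_tri (tris False Y)"
  have n0: "0 < n" using assms by (simp add: n_def)
  have lW: "length W = m" by (simp add: W_def m_def)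
  have ZTe: "ZT = run True 0 init_state W @ run True m sm X"
    unfolding ZT_def tris_def run_append sm_def using lW by simp
  have lZT: "length ZT = m + n" by (simp add: ZTe lW n_def)
  have lGT: "length GT = n + m" by (simp add: GT_def tris_def n_def m_def)
  obtain f f' g g' where
    P1: "\<forall>i < m. map_tri f f' (run True 0 init_state W ! i) = rev_tri (run False 0 init_state Y ! (m - Suc i))"
    and P2: "\<forall>v \<in> verts (run True 0 init_state W). g (f v) = v \<and> vcol (f v) = vcol v"
    and P2e: "\<forall>e \<in> edges (run True 0 init_state W). g' (f' e) = e"
    and P3: "\<forall>p. f (Fv sm p) = RV p \<and> g (RV p) = Fv sm p \<and> f' (Fe sm p) = RE p \<and> g' (RE p) = Fe sm p"
    using lemP[OF Inv_init[of True] Inv_init[of False], where Y=Y] unfolding W_def[symmetric] sm_def[symmetric] m_def[symmetric]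
    by (auto simp: Fv_init Fe_init)
  have invm: "Inv True m sm" using Inv_fin[OF Inv_init, of True W] lW by (simp add: sm_def)
  have smv: "\<And>p i c. Fv sm p = NV True i c \<Longrightarrow> i \<le> m" and sme: "\<And>p i kk. Fe sm p = NE True i kk \<Longrightarrow> i \<le> m"
    and smc: "\<And>p. vcol (Fv sm p) = (if p \<le> 0 then Blue else Red)"
    using invm unfolding Inv_def by blast+
  define \<alpha> where "\<alpha> = shv m f"
  define \<beta> where "\<beta> = she m f'"
  define \<gamma> where "\<gamma> = unv m g"
  define \<delta> where "\<delta> = une m g'"
  have aF: "\<alpha> (Fv sm p) = RV p" for p unfolding \<alpha>_def using P3 by (subst shv_old) (auto dest: smv)
  have bF: "\<beta> (Fe sm p) = RE p" for p unfolding \<beta>_def using P3 by (subst she_old) (auto dest: sme)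
  have XX: "map (map_tri \<alpha> \<beta>) (run True m sm X) = run True 0 init_state X"
    apply (rule lemA)
    subgoal using aF bF by (simp add: Fv_init Fe_init)
    subgoal by (simp add: \<alpha>_def)
    subgoal by (simp add: \<beta>_def)
    done
  have VW: "v \<in> verts (run True 0 init_state W) \<Longrightarrow> (\<exists>q. v = RV q) \<or> (\<exists>i c. v = NV True i c \<and> i \<le> m)" for v
    using verts_run[of True 0 init_state W] lW by (auto simp: Fv_init)
  have EW: "e \<in> edges (run True 0 init_state W) \<Longrightarrow> (\<exists>q. e = RE q) \<or> (\<exists>i kk. e = NE True i kk \<and> i \<le> m)" for e
    using edges_run[of True 0 init_state W] lW by (auto simp: Fe_init)
  have aW: "\<alpha> v = f v" if "v \<in> verts (run True 0 init_state W)" for v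
    using VW[OF that] unfolding \<alpha>_def by (auto intro: shv_old)
  have bW: "\<beta> e = f' e" if "e \<in> edges (run True 0 init_state W)" for e
    using EW[OF that] unfolding \<beta>_def by (auto intro: she_old)
  have VX: "v \<in> verts (run True m sm X) \<Longrightarrow> v \<in> range (Fv sm) \<or> (\<exists>i c. v = NV True i c \<and> m < i)" for v
    using verts_run[of True m sm X] by auto
  have EX: "e \<in> edges (run True m sm X) \<Longrightarrow> e \<in> range (Fe sm) \<or> (\<exists>i kk. e = NE True i kk \<and> m < i)" for e
    using edges_run[of True m sm X] by auto
  have lY: "length (run False 0 init_state Y) = length (run True 0 init_state W)" using lW by (simp add: m_def)
  have P1': "\<forall>i<length (run True 0 init_state W). map_tri f f' (run True 0 init_state W ! i) =
      rev_tri (run False 0 init_state Y ! (length (run True 0 init_state W) - Suc i))"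
    using P1 lW by simp
  have fWY: "f v \<in> verts (run False 0 init_state Y)" if "v \<in> verts (run True 0 init_state W)" for v
    by (rule img_verts[OF P1' lY that])
  have fWYe: "f' e \<in> edges (run False 0 init_state Y)" if "e \<in> edges (run True 0 init_state W)" for e
    by (rule img_edges[OF P1' lY that])
  have notT: "u \<noteq> NV True i c" if "u \<in> verts (run False 0 init_state Y)" for u i c
    using verts_run[of False 0 init_state Y] that by (auto simp: Fv_init)
  have notTe: "u \<noteq> NE True i kk" if "u \<in> edges (run False 0 init_state Y)" for u i kk
    using edges_run[of False 0 init_state Y] that by (auto simp: Fe_init)
  define \<phi> where "\<phi> i = (if i < m then n + (m - Suc i) else i - m)" for i
  define \<psi> where "\<psi> i = (if i < n then i + m else m - Suc (i - n))" for i
  have tri: "map_tri \<alpha> \<beta> (ZT ! i) = GT ! \<phi> i" if i: "i < m + n" for i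
  proof (cases "i < m")
    case True
    have "map_tri \<alpha> \<beta> (ZT ! i) = map_tri \<alpha> \<beta> (run True 0 init_state W ! i)"
      unfolding ZTe using True lW by (simp add: nth_append)
    also have "\<dots> = map_tri f f' (run True 0 init_state W ! i)"
      apply (rule map_tri_cong)
      using aW bW nth_verts[of i "run True 0 init_state W"] nth_edges[of i "run True 0 init_state W"] True lW by auto
    also have "\<dots> = rev_tri (run False 0 init_state Y ! (m - Suc i))" using P1 True by blast
    also have "\<dots> = GT ! \<phi> i"
    proof -
      have nn: "n = length (tris True X)" by (simp add: n_def tris_def)
      have "GT ! \<phi> i = map rev_tri (tris False Y) ! (m - Suc i)"
      proof -
        have "\<phi> i = length (tris True X) + (m - Suc i)" using True nn by (simp add: \<phi>_def)
        then show ?thesis unfolding GT_def by (simp only: nth_append_length_plus)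
      qed
      also have "\<dots> = rev_tri (run False 0 init_state Y ! (m - Suc i))"
        using True by (simp add: tris_def m_def)
      finally show ?thesis by simp
    qed
    finally show ?thesis .
  next
    case False
    have "map_tri \<alpha> \<beta> (ZT ! i) = map_tri \<alpha> \<beta> (run True m sm X ! (i - m))"
      unfolding ZTe using False lW by (simp add: nth_append)
    also have "\<dots> = map (map_tri \<alpha> \<beta>) (run True m sm X) ! (i - m)" using False i by (simp add: n_def)
    also have "\<dots> = GT ! \<phi> i"
    proof -
      have lt: "i - m < length X" using False i by (simp add: n_def)
      show ?thesis unfolding XX GT_def \<phi>_def tris_def using False lt by (simp add: nth_append)
    qed
    finally show ?thesis .
  qed
  have phib: "bij_betw \<phi> {..<m + n} {..<n + m}"
    apply (rule bij_betw_byWitness[where f'=\<psi>])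
    unfolding \<phi>_def \<psi>_def by auto
  have phis: "\<exists>i<m + n. \<phi> i = i'" if "i' < n + m" for i'
    using phib that unfolding bij_betw_def by (metis imageE lessThan_iff)
  have img: "\<alpha> ` verts ZT = verts GT"
  proof
    show "\<alpha> ` verts ZT \<subseteq> verts GT"
    proof
      fix u assume "u \<in> \<alpha> ` verts ZT"
      then obtain v where v: "v \<in> verts ZT" "u = \<alpha> v" by auto
      obtain i where i: "i < length ZT" "v \<in> tri_verts (ZT ! i)" using verts_nth[OF v(1)] by blast
      have "u \<in> tri_verts (map_tri \<alpha> \<beta> (ZT ! i))" using i(2) v(2) by (simp add: tri_verts_map)
      also have "\<dots> = tri_verts (GT ! \<phi> i)" using tri i(1) lZT by simp
      also have "\<dots> \<subseteq> verts GT" apply (rule nth_verts) using i(1) lZT lGT unfolding \<phi>_def by auto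
      finally show "u \<in> verts GT" .
    qed
    show "verts GT \<subseteq> \<alpha> ` verts ZT"
    proof
      fix u assume "u \<in> verts GT"
      then obtain i' where i': "i' < length GT" "u \<in> tri_verts (GT ! i')" using verts_nth by blast
      obtain i where i: "i < m + n" "\<phi> i = i'" using phis i'(1) lGT by auto
      have "u \<in> tri_verts (map_tri \<alpha> \<beta> (ZT ! i))" using tri[OF i(1)] i(2) i'(2) by simp
      also have "\<dots> = \<alpha> ` tri_verts (ZT ! i)" by (simp add: tri_verts_map)
      also have "\<dots> \<subseteq> \<alpha> ` verts ZT" using nth_verts[of i ZT] i(1) lZT by auto
      finally show "u \<in> \<alpha> ` verts ZT" .
    qed
  qed
  have imge: "\<beta> ` edges ZT = edges GT"
  proof
    show "\<beta> ` edges ZT \<subseteq> edges GT"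
    proof
      fix u assume "u \<in> \<beta> ` edges ZT"
      then obtain v where v: "v \<in> edges ZT" "u = \<beta> v" by auto
      obtain i where i: "i < length ZT" "v \<in> tri_edges (ZT ! i)" using edges_nth[OF v(1)] by blast
      have "u \<in> tri_edges (map_tri \<alpha> \<beta> (ZT ! i))" using i(2) v(2) by (simp add: tri_edges_map)
      also have "\<dots> = tri_edges (GT ! \<phi> i)" using tri i(1) lZT by simp
      also have "\<dots> \<subseteq> edges GT" apply (rule nth_edges) using i(1) lZT lGT unfolding \<phi>_def by auto
      finally show "u \<in> edges GT" .
    qed
    show "edges GT \<subseteq> \<beta> ` edges ZT"
    proof
      fix u assume "u \<in> edges GT"
      then obtain i' where i': "i' < length GT" "u \<in> tri_edges (GT ! i')" using edges_nth by blast
      obtain i where i: "i < m + n" "\<phi> i = i'" using phis i'(1) lGT by auto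
      have "u \<in> tri_edges (map_tri \<alpha> \<beta> (ZT ! i))" using tri[OF i(1)] i(2) i'(2) by simp
      also have "\<dots> = \<beta> ` tri_edges (ZT ! i)" by (simp add: tri_edges_map)
      also have "\<dots> \<subseteq> \<beta> ` edges ZT" using nth_edges[of i ZT] i(1) lZT by auto
      finally show "u \<in> \<beta> ` edges ZT" .
    qed
  qed
  have inv_v: "\<gamma> (\<alpha> v) = v" if "v \<in> verts ZT" for v
  proof -
    from that have "v \<in> verts (run True 0 init_state W) \<or> v \<in> verts (run True m sm X)" unfolding ZTe by simp
    then show ?thesis
    proof
      assume v: "v \<in> verts (run True 0 init_state W)"
      have "\<gamma> (\<alpha> v) = g (f v)" unfolding aW[OF v] \<gamma>_def using notT[OF fWY[OF v]] by (rule unv_old)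
      then show ?thesis using P2 v by simp
    next
      assume v: "v \<in> verts (run True m sm X)"
      from VX[OF v] show ?thesis
      proof
        assume "v \<in> range (Fv sm)"
        then obtain p where p: "v = Fv sm p" by auto
        show ?thesis unfolding p aF \<gamma>_def using P3 by simp
      next
        assume "\<exists>i c. v = NV True i c \<and> m < i"
        then obtain i c where "v = NV True i c" "m < i" by blast
        then show ?thesis unfolding \<alpha>_def \<gamma>_def by simp
      qed
    qed
  qed
  have inv_e: "\<delta> (\<beta> e) = e" if "e \<in> edges ZT" for e
  proof -
    from that have "e \<in> edges (run True 0 init_state W) \<or> e \<in> edges (run True m sm X)" unfolding ZTe by simp
    then show ?thesis
    proof
      assume v: "e \<in> edges (run True 0 init_state W)"
      have "\<delta> (\<beta> e) = g' (f' e)" unfolding bW[OF v] \<delta>_def using notTe[OF fWYe[OF v]] by (rule une_old)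
      then show ?thesis using P2e v by simp
    next
      assume v: "e \<in> edges (run True m sm X)"
      from EX[OF v] show ?thesis
      proof
        assume "e \<in> range (Fe sm)"
        then obtain p where p: "e = Fe sm p" by auto
        show ?thesis unfolding p bF \<delta>_def using P3 by simp
      next
        assume "\<exists>i kk. e = NE True i kk \<and> m < i"
        then obtain i kk where "e = NE True i kk" "m < i" by blast
        then show ?thesis unfolding \<beta>_def \<delta>_def by simp
      qed
    qed
  qed
  have col: "vcol (\<alpha> v) = vcol v" if "v \<in> verts ZT" for v
  proof -
    from that have "v \<in> verts (run True 0 init_state W) \<or> v \<in> verts (run True m sm X)" unfolding ZTe by simp
    then show ?thesis
    proof
      assume v: "v \<in> verts (run True 0 init_state W)"
      then show ?thesis using aW[OF v] P2 by simp
    next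
      assume v: "v \<in> verts (run True m sm X)"
      from VX[OF v] show ?thesis
      proof
        assume "v \<in> range (Fv sm)"
        then obtain p where p: "v = Fv sm p" by auto
        show ?thesis unfolding p aF using smc[of p] by simp
      next
        assume "\<exists>i c. v = NV True i c \<and> m < i"
        then obtain i c where "v = NV True i c" "m < i" by blast
        then show ?thesis unfolding \<alpha>_def by simp
      qed
    qed
  qed
  have bv: "bij_betw \<alpha> (verts ZT) (verts GT)"
    unfolding bij_betw_def using img inj_on_inverseI[of "verts ZT" \<gamma> \<alpha>] inv_v by blast
  have be: "bij_betw \<beta> (edges ZT) (edges GT)"
    unfolding bij_betw_def using imge inj_on_inverseI[of "edges ZT" \<delta> \<beta>] inv_e by blast
  have Tat_eq: "Tat (rev (map prime_letter Y) @ X) (length Y + 1) = (ZT, m)"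
    by (simp add: Tat_def ZT_def W_def m_def)
  have glue_eq: "glue (Tplus X) (Tminus Y) = (GT, 0)"
    by (simp add: glue_def Tplus_def Tminus_def GT_def)
  show ?thesis
    unfolding Tat_eq glue_eq rt_equiv_def fst_conv snd_conv
  proof (intro conjI exI)
    show "m < length ZT" using lZT n0 by simp
    show "bij_betw \<phi> {..<length ZT} {..<length GT}" using phib lZT lGT by simp
    show "\<phi> m = 0" by (simp add: \<phi>_def)
    show "bij_betw \<alpha> (verts ZT) (verts GT)" by (rule bv)
    show "bij_betw \<beta> (edges ZT) (edges GT)" by (rule be)
    show "\<forall>v\<in>verts ZT. vcol (\<alpha> v) = vcol v" using col by blast
    show "\<forall>i<length ZT. \<exists>k<(3::nat). map_tri \<alpha> \<beta> (ZT ! i) = (rot ^^ k) (GT ! \<phi> i)"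
      using tri lZT by (metis funpow_0 zero_less_numeral)
  qed
qed

end
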